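(* Let $p \geq 7$ be a prime with $p \equiv \pm 3 \pmod 8$, and let $G = \mathrm{PSL}(2,p^2)$. If $m(G) = 3$, then $G$ fails the replacement property.
   Context: For a finite group $G$, a finite sequence $s=(g_1,\dots,g_k)$ of elements of $G$ is an irredundant generating sequence if $\langle g_1,\dots,g_k\rangle = G$ and $g_i \notin \langle g_j : j \neq i\rangle$ for every $i$. $m(G)$ denotes the maximal length of an irredundant generating sequence of $G$. An irredundant generating sequence $s=(g_1,\dots,g_k)$ satisfies the replacement property if for every nontrivial $g \in G$ there is an index $i$ such that $(g_1,\dots,g_{i-1},g,g_{i+1},\dots,g_k)$ generates $G$ (not necessarily irredundantly). $G$ satisfies the replacement property if every irredundant generating sequence of length $m(G)$ satisfies it; $G$ fails the replacement property otherwise. *)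

theory Defs
  imports "HOL-Algebra.Algebra" "HOL-Computational_Algebra.Primes"
begin

definition irredundant_gen_seq :: "('a, 'b) monoid_scheme \<Rightarrow> 'a list \<Rightarrow> bool" where
  "irredundant_gen_seq G s \<longleftrightarrow>
     set s \<subseteq> carrier G \<and>
     generate G (set s) = carrier G \<and>
     (\<forall>i < length s. s ! i \<notin> generate G {s ! j | j. j < length s \<and> j \<noteq> i})"

definition max_irr_len :: "('a, 'b) monoid_scheme \<Rightarrow> nat" where
  "max_irr_len G = (GREATEST k. \<exists>s. irredundant_gen_seq G s \<and> length s = k)"

definition seq_replacement_property :: "('a, 'b) monoid_scheme \<Rightarrow> 'a list \<Rightarrow> bool" where
  "seq_replacement_property G s \<longleftrightarrow>
     (\<forall>g \<in> carrier G. g \<noteq> \<one>\<^bsub>G\<^esub> \<longrightarrow>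
        (\<exists>i < length s. generate G (set (s[i := g])) = carrier G))"

definition replacement_property :: "('a, 'b) monoid_scheme \<Rightarrow> bool" where
  "replacement_property G \<longleftrightarrow>
     (\<forall>s. irredundant_gen_seq G s \<and> length s = max_irr_len G \<longrightarrow> seq_replacement_property G s)"

section \<open>A concrete model of GF(p^2) = F_p(sqrt 2), valid when 2 is a non-square mod p\<close>

type_synonym fe = "int \<times> int"  (* (a,b) represents a + b*sqrt 2 *)

definition fel :: "int \<Rightarrow> fe set" where
  "fel p = {(a, b). 0 \<le> a \<and> a < p \<and> 0 \<le> b \<and> b < p}"

fun fadd :: "int \<Rightarrow> fe \<Rightarrow> fe \<Rightarrow> fe" where
  "fadd p (a, b) (c, d) = ((a + c) mod p, (b + d) mod p)"

fun fmul :: "int \<Rightarrow> fe \<Rightarrow> fe \<Rightarrow> fe" where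
  "fmul p (a, b) (c, d) = ((a * c + 2 * b * d) mod p, (a * d + b * c) mod p)"

fun fneg :: "int \<Rightarrow> fe \<Rightarrow> fe" where
  "fneg p (a, b) = ((- a) mod p, (- b) mod p)"

section \<open>2x2 matrices (a,b,c,d) = [[a,b],[c,d]] over this field, SL(2), PSL(2)\<close>

type_synonym mat2 = "fe \<times> fe \<times> fe \<times> fe"

fun mmul :: "int \<Rightarrow> mat2 \<Rightarrow> mat2 \<Rightarrow> mat2" where
  "mmul p (a, b, c, d) (e, f, g, h) =
     (fadd p (fmul p a e) (fmul p b g), fadd p (fmul p a f) (fmul p b h),
      fadd p (fmul p c e) (fmul p d g), fadd p (fmul p c f) (fmul p d h))"

fun mdet :: "int \<Rightarrow> mat2 \<Rightarrow> fe" where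
  "mdet p (a, b, c, d) = fadd p (fmul p a d) (fneg p (fmul p b c))"

fun mneg :: "int \<Rightarrow> mat2 \<Rightarrow> mat2" where
  "mneg p (a, b, c, d) = (fneg p a, fneg p b, fneg p c, fneg p d)"

definition mid :: mat2 where
  "mid = ((1, 0), (0, 0), (0, 0), (1, 0))"

definition SL2 :: "int \<Rightarrow> mat2 set" where
  "SL2 p = {(a, b, c, d). a \<in> fel p \<and> b \<in> fel p \<and> c \<in> fel p \<and> d \<in> fel p
                          \<and> mdet p (a, b, c, d) = (1, 0)}"

definition psl_mult :: "int \<Rightarrow> mat2 set \<Rightarrow> mat2 set \<Rightarrow> mat2 set" where
  "psl_mult p A B = {mmul p u v | u v. u \<in> A \<and> v \<in> B}"

definition PSL2_sq :: "int \<Rightarrow> mat2 set monoid" where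
  "PSL2_sq p = \<lparr> carrier = {{M, mneg p M} | M. M \<in> SL2 p},
                monoid.mult = psl_mult p,
                monoid.one = {mid, mneg p mid} \<rparr>"

end

theory Submission
  imports Defs "HOL-Number_Theory.Number_Theory"
begin


definition Fr :: "int \<Rightarrow> fe ring" where
  "Fr p = \<lparr>carrier = fel p, monoid.mult = fmul p, one = (1,0), ring.zero = (0,0), ring.add = fadd p\<rparr>"

lemma Fr_simps:
  "carrier (Fr p) = fel p" "monoid.mult (Fr p) = fmul p" "one (Fr p) = (1,0)" "ring.zero (Fr p) = (0,0)" "ring.add (Fr p) = fadd p"
  by (simp_all add: Fr_def)

locale qf = residues p for p :: int +
  assumes p_gt: "p > 2"
begin

abbreviation two where "two \<equiv> (2::int)"

lemma fmul_R: "fmul p (a,b) (c,d) = (a \<otimes> c \<oplus> two \<otimes> (b \<otimes> d), a \<otimes> d \<oplus> b \<otimes> c)"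
  by (simp add: res_add_eq res_mult_eq mod_simps algebra_simps)

lemma fadd_R: "fadd p (a,b) (c,d) = (a \<oplus> c, b \<oplus> d)"
  by (simp add: res_add_eq)

lemma fneg_R: "fneg p (a,b) = (\<ominus> a, \<ominus> b)"
  by (simp add: res_neg_eq)

lemma two_in: "two \<in> carrier R" using p_gt by (simp add: res_carrier_eq)

lemma fel_R: "fel p = carrier R \<times> carrier R"
  by (auto simp: fel_def res_carrier_eq)

lemmas Rsimps = fmul_R fadd_R fneg_R fel_R mem_Times_iff fst_conv snd_conv prod.inject

lemma zero_R: "(0::int) = \<zero>" by (simp add: res_zero_eq)
lemma one_R: "(1::int) = \<one>" by (simp add: res_one_eq)

lemma cringF: "cring (Fr p)"
proof (rule cringI)
  show "abelian_group (Fr p)"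
  proof (rule abelian_groupI)
    fix x y z assume xyz: "x \<in> carrier (Fr p)" "y \<in> carrier (Fr p)" "z \<in> carrier (Fr p)"
    show "x \<oplus>\<^bsub>Fr p\<^esub> y \<in> carrier (Fr p)" using xyz
      by (cases x; cases y) (simp add: Fr_def Rsimps)
    show "x \<oplus>\<^bsub>Fr p\<^esub> y \<oplus>\<^bsub>Fr p\<^esub> z = x \<oplus>\<^bsub>Fr p\<^esub> (y \<oplus>\<^bsub>Fr p\<^esub> z)" using xyz
      by (cases x; cases y; cases z) (simp add: Fr_def mod_simps ac_simps)
    show "x \<oplus>\<^bsub>Fr p\<^esub> y = y \<oplus>\<^bsub>Fr p\<^esub> x" using xyz
      by (cases x; cases y) (simp add: Fr_def ac_simps)
    show "\<zero>\<^bsub>Fr p\<^esub> \<oplus>\<^bsub>Fr p\<^esub> x = x" using xyz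
      by (cases x) (simp add: Fr_def fel_def)
    show "\<exists>y\<in>carrier (Fr p). y \<oplus>\<^bsub>Fr p\<^esub> x = \<zero>\<^bsub>Fr p\<^esub>" using xyz
      by (cases x) (rule bexI[of _ "fneg p x"], use p_gt in \<open>auto simp: Fr_def fel_def mod_simps\<close>)
  next
    show "\<zero>\<^bsub>Fr p\<^esub> \<in> carrier (Fr p)" using p_gt by (simp add: Fr_def fel_def)
  qed
  show "comm_monoid (Fr p)"
  proof (rule comm_monoidI)
    fix x y z assume xyz: "x \<in> carrier (Fr p)" "y \<in> carrier (Fr p)" "z \<in> carrier (Fr p)"
    show "x \<otimes>\<^bsub>Fr p\<^esub> y \<in> carrier (Fr p)" using xyz two_in
      by (cases x; cases y) (simp add: Fr_def Rsimps)
    show "x \<otimes>\<^bsub>Fr p\<^esub> y \<otimes>\<^bsub>Fr p\<^esub> z = x \<otimes>\<^bsub>Fr p\<^esub> (y \<otimes>\<^bsub>Fr p\<^esub> z)" using xyz two_in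
      by (cases x; cases y; cases z) (simp only: Fr_simps Rsimps, safe; algebra)
    show "x \<otimes>\<^bsub>Fr p\<^esub> y = y \<otimes>\<^bsub>Fr p\<^esub> x" using xyz two_in
      by (cases x; cases y) (simp only: Fr_simps Rsimps, safe; algebra)
    show "\<one>\<^bsub>Fr p\<^esub> \<otimes>\<^bsub>Fr p\<^esub> x = x" using xyz two_in
      by (cases x) (simp only: Fr_simps Rsimps zero_R one_R, safe; algebra?; simp)
  next
    show "\<one>\<^bsub>Fr p\<^esub> \<in> carrier (Fr p)" using p_gt by (simp add: Fr_def fel_def)
  qed
  fix x y z assume xyz: "x \<in> carrier (Fr p)" "y \<in> carrier (Fr p)" "z \<in> carrier (Fr p)"
  show "(x \<oplus>\<^bsub>Fr p\<^esub> y) \<otimes>\<^bsub>Fr p\<^esub> z = x \<otimes>\<^bsub>Fr p\<^esub> z \<oplus>\<^bsub>Fr p\<^esub> y \<otimes>\<^bsub>Fr p\<^esub> z" using xyz two_in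
      by (cases x; cases y; cases z) (simp only: Fr_simps Rsimps, safe; algebra)
qed


sublocale F: cring "Fr p" by (rule cringF)

abbreviation FF where "FF \<equiv> Fr p"

lemma Fops: "fmul p x y = x \<otimes>\<^bsub>FF\<^esub> y" "fadd p x y = x \<oplus>\<^bsub>FF\<^esub> y"
  "((1::int),(0::int)) = \<one>\<^bsub>FF\<^esub>" "((0::int),(0::int)) = \<zero>\<^bsub>FF\<^esub>" "fel p = carrier FF"
  by (simp_all add: Fr_simps)

lemma fadd_in: "fadd p x y \<in> fel p"
  using p_gt by (cases x; cases y) (simp add: fel_def)
lemma fmul_in: "fmul p x y \<in> fel p"
  using p_gt by (cases x; cases y) (simp add: fel_def)
lemma fneg_in: "fneg p x \<in> fel p"
  using p_gt by (cases x) (simp add: fel_def)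

lemma fneg_F: assumes "x \<in> fel p" shows "fneg p x = \<ominus>\<^bsub>FF\<^esub> x"
proof -
  have "fneg p x \<oplus>\<^bsub>FF\<^esub> x = \<zero>\<^bsub>FF\<^esub>"
    using assms p_gt by (cases x) (simp add: Fr_simps fel_def mod_simps)
  then show ?thesis using assms fneg_in by (simp add: F.minus_equality Fr_simps)
qed

definition inM :: "mat2 \<Rightarrow> bool" where
  "inM M \<longleftrightarrow> (case M of (a,b,c,d) \<Rightarrow> a \<in> fel p \<and> b \<in> fel p \<and> c \<in> fel p \<and> d \<in> fel p)"

lemma SL2_iff: "(a,b,c,d) \<in> SL2 p \<longleftrightarrow> a \<in> carrier FF \<and> b \<in> carrier FF \<and> c \<in> carrier FF \<and> d \<in> carrier FF
   \<and> a \<otimes>\<^bsub>FF\<^esub> d \<ominus>\<^bsub>FF\<^esub> b \<otimes>\<^bsub>FF\<^esub> c = \<one>\<^bsub>FF\<^esub>"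
  by (auto simp: SL2_def Fops fneg_F F.minus_eq fmul_in[unfolded Fops])

lemma mmul_F: "mmul p (a,b,c,d) (e,f,g,h) =
  (a \<otimes>\<^bsub>FF\<^esub> e \<oplus>\<^bsub>FF\<^esub> b \<otimes>\<^bsub>FF\<^esub> g, a \<otimes>\<^bsub>FF\<^esub> f \<oplus>\<^bsub>FF\<^esub> b \<otimes>\<^bsub>FF\<^esub> h,
   c \<otimes>\<^bsub>FF\<^esub> e \<oplus>\<^bsub>FF\<^esub> d \<otimes>\<^bsub>FF\<^esub> g, c \<otimes>\<^bsub>FF\<^esub> f \<oplus>\<^bsub>FF\<^esub> d \<otimes>\<^bsub>FF\<^esub> h)"
  by (simp add: Fops)

lemma mneg_F: "a \<in> carrier FF \<Longrightarrow> b \<in> carrier FF \<Longrightarrow> c \<in> carrier FF \<Longrightarrow> d \<in> carrier FF \<Longrightarrow>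
  mneg p (a,b,c,d) = (\<ominus>\<^bsub>FF\<^esub> a, \<ominus>\<^bsub>FF\<^esub> b, \<ominus>\<^bsub>FF\<^esub> c, \<ominus>\<^bsub>FF\<^esub> d)"
  by (simp add: fneg_F Fops)

lemma mid_F: "mid = (\<one>\<^bsub>FF\<^esub>, \<zero>\<^bsub>FF\<^esub>, \<zero>\<^bsub>FF\<^esub>, \<one>\<^bsub>FF\<^esub>)"
  by (simp add: mid_def Fr_simps)

lemma mmul_SL2: assumes "A \<in> SL2 p" "B \<in> SL2 p" shows "mmul p A B \<in> SL2 p"
proof -
  obtain a b c d where A: "A = (a,b,c,d)" by (cases A) auto
  obtain e f g h where B: "B = (e,f,g,h)" by (cases B) auto
  have ca: "a \<in> carrier FF" "b \<in> carrier FF" "c \<in> carrier FF" "d \<in> carrier FF"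
   and da: "a \<otimes>\<^bsub>FF\<^esub> d \<ominus>\<^bsub>FF\<^esub> b \<otimes>\<^bsub>FF\<^esub> c = \<one>\<^bsub>FF\<^esub>"
    using assms(1) unfolding A SL2_iff by auto
  have cb: "e \<in> carrier FF" "f \<in> carrier FF" "g \<in> carrier FF" "h \<in> carrier FF"
   and db: "e \<otimes>\<^bsub>FF\<^esub> h \<ominus>\<^bsub>FF\<^esub> f \<otimes>\<^bsub>FF\<^esub> g = \<one>\<^bsub>FF\<^esub>"
    using assms(2) unfolding B SL2_iff by auto
  have "(a \<otimes>\<^bsub>FF\<^esub> e \<oplus>\<^bsub>FF\<^esub> b \<otimes>\<^bsub>FF\<^esub> g) \<otimes>\<^bsub>FF\<^esub> (c \<otimes>\<^bsub>FF\<^esub> f \<oplus>\<^bsub>FF\<^esub> d \<otimes>\<^bsub>FF\<^esub> h)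
     \<ominus>\<^bsub>FF\<^esub> (a \<otimes>\<^bsub>FF\<^esub> f \<oplus>\<^bsub>FF\<^esub> b \<otimes>\<^bsub>FF\<^esub> h) \<otimes>\<^bsub>FF\<^esub> (c \<otimes>\<^bsub>FF\<^esub> e \<oplus>\<^bsub>FF\<^esub> d \<otimes>\<^bsub>FF\<^esub> g)
     = (a \<otimes>\<^bsub>FF\<^esub> d \<ominus>\<^bsub>FF\<^esub> b \<otimes>\<^bsub>FF\<^esub> c) \<otimes>\<^bsub>FF\<^esub> (e \<otimes>\<^bsub>FF\<^esub> h \<ominus>\<^bsub>FF\<^esub> f \<otimes>\<^bsub>FF\<^esub> g)"
    using ca cb by algebra
  then show ?thesis unfolding A B mmul_F SL2_iff using ca cb da db by simp
qed

lemma mmul_assoc: assumes "A \<in> SL2 p" "B \<in> SL2 p" "C \<in> SL2 p"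
  shows "mmul p (mmul p A B) C = mmul p A (mmul p B C)"
proof -
  obtain a b c d where A: "A = (a,b,c,d)" by (cases A) auto
  obtain e f g h where B: "B = (e,f,g,h)" by (cases B) auto
  obtain i j k l where C: "C = (i,j,k,l)" by (cases C) auto
  show ?thesis using assms unfolding A B C mmul_F SL2_iff by (simp only: prod.inject; safe; algebra)
qed


lemma SL2_E: assumes "M \<in> SL2 p"
  obtains a b c d where "M = (a,b,c,d)" "a \<in> carrier FF" "b \<in> carrier FF" "c \<in> carrier FF" "d \<in> carrier FF"
     "a \<otimes>\<^bsub>FF\<^esub> d \<ominus>\<^bsub>FF\<^esub> b \<otimes>\<^bsub>FF\<^esub> c = \<one>\<^bsub>FF\<^esub>"
  using assms by (cases M) (auto simp: SL2_iff)

declare mmul.simps[simp del] mneg.simps[simp del]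

lemma mid_SL2: "mid \<in> SL2 p"
  unfolding mid_F SL2_iff by (simp add: F.minus_eq)

lemma mid_l: "M \<in> SL2 p \<Longrightarrow> mmul p mid M = M"
  by (erule SL2_E) (simp add: mid_F mmul_F)
lemma mid_r: "M \<in> SL2 p \<Longrightarrow> mmul p M mid = M"
  by (erule SL2_E) (simp add: mid_F mmul_F)

lemma mneg_SL2: "M \<in> SL2 p \<Longrightarrow> mneg p M \<in> SL2 p"
  by (erule SL2_E) (simp add: mneg_F SL2_iff F.minus_eq F.l_minus F.r_minus)

lemma mneg_mneg: "M \<in> SL2 p \<Longrightarrow> mneg p (mneg p M) = M"
  by (erule SL2_E) (simp add: mneg_F)

lemma mneg_l: "A \<in> SL2 p \<Longrightarrow> B \<in> SL2 p \<Longrightarrow> mmul p (mneg p A) B = mneg p (mmul p A B)"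
  by (erule SL2_E, erule SL2_E) (simp add: mneg_F mmul_F, safe; algebra)
lemma mneg_r: "A \<in> SL2 p \<Longrightarrow> B \<in> SL2 p \<Longrightarrow> mmul p A (mneg p B) = mneg p (mmul p A B)"
  by (erule SL2_E, erule SL2_E) (simp add: mneg_F mmul_F, safe; algebra)

fun madj :: "mat2 \<Rightarrow> mat2" where
  "madj (a,b,c,d) = (d, fneg p b, fneg p c, a)"

lemma madj_SL2: "M \<in> SL2 p \<Longrightarrow> madj M \<in> SL2 p"
proof (erule SL2_E)
  fix a b c d assume h: "M = (a,b,c,d)" "a \<in> carrier FF" "b \<in> carrier FF" "c \<in> carrier FF" "d \<in> carrier FF"
     "a \<otimes>\<^bsub>FF\<^esub> d \<ominus>\<^bsub>FF\<^esub> b \<otimes>\<^bsub>FF\<^esub> c = \<one>\<^bsub>FF\<^esub>"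
  have "d \<otimes>\<^bsub>FF\<^esub> a \<ominus>\<^bsub>FF\<^esub> (\<ominus>\<^bsub>FF\<^esub> b) \<otimes>\<^bsub>FF\<^esub> (\<ominus>\<^bsub>FF\<^esub> c) = a \<otimes>\<^bsub>FF\<^esub> d \<ominus>\<^bsub>FF\<^esub> b \<otimes>\<^bsub>FF\<^esub> c"
    using h by algebra
  then show "madj M \<in> SL2 p" using h by (simp add: SL2_iff fneg_F Fops)
qed

lemma madj_l: "M \<in> SL2 p \<Longrightarrow> mmul p (madj M) M = mid"
proof (erule SL2_E)
  fix a b c d assume h: "M = (a,b,c,d)" "a \<in> carrier FF" "b \<in> carrier FF" "c \<in> carrier FF" "d \<in> carrier FF"
     "a \<otimes>\<^bsub>FF\<^esub> d \<ominus>\<^bsub>FF\<^esub> b \<otimes>\<^bsub>FF\<^esub> c = \<one>\<^bsub>FF\<^esub>"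
  have e1: "d \<otimes>\<^bsub>FF\<^esub> a \<oplus>\<^bsub>FF\<^esub> (\<ominus>\<^bsub>FF\<^esub> b) \<otimes>\<^bsub>FF\<^esub> c = a \<otimes>\<^bsub>FF\<^esub> d \<ominus>\<^bsub>FF\<^esub> b \<otimes>\<^bsub>FF\<^esub> c"
    using h by algebra
  have e2: "(\<ominus>\<^bsub>FF\<^esub> c) \<otimes>\<^bsub>FF\<^esub> b \<oplus>\<^bsub>FF\<^esub> a \<otimes>\<^bsub>FF\<^esub> d = a \<otimes>\<^bsub>FF\<^esub> d \<ominus>\<^bsub>FF\<^esub> b \<otimes>\<^bsub>FF\<^esub> c"
    using h by algebra
  have e3: "d \<otimes>\<^bsub>FF\<^esub> b \<oplus>\<^bsub>FF\<^esub> (\<ominus>\<^bsub>FF\<^esub> b) \<otimes>\<^bsub>FF\<^esub> d = \<zero>\<^bsub>FF\<^esub>"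
    using h by algebra
  have e4: "(\<ominus>\<^bsub>FF\<^esub> c) \<otimes>\<^bsub>FF\<^esub> a \<oplus>\<^bsub>FF\<^esub> a \<otimes>\<^bsub>FF\<^esub> c = \<zero>\<^bsub>FF\<^esub>"
    using h by algebra
  show "mmul p (madj M) M = mid" using h e1 e2 e3 e4 by (simp add: fneg_F Fops mmul_F mid_F)
qed

definition cls :: "mat2 \<Rightarrow> mat2 set" where "cls M = {M, mneg p M}"

abbreviation G where "G \<equiv> PSL2_sq p"

lemma carrier_G: "carrier G = cls ` SL2 p"
  unfolding PSL2_sq_def cls_def image_def by (simp only: partial_object.simps) blast

lemma one_G: "\<one>\<^bsub>G\<^esub> = cls mid"
  by (simp add: PSL2_sq_def cls_def)

lemma mult_G: assumes "A \<in> SL2 p" "B \<in> SL2 p" shows "cls A \<otimes>\<^bsub>G\<^esub> cls B = cls (mmul p A B)"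
proof -
  have "{mmul p u v |u v. u \<in> {A, mneg p A} \<and> v \<in> {B, mneg p B}} =
     {mmul p A B, mmul p A (mneg p B), mmul p (mneg p A) B, mmul p (mneg p A) (mneg p B)}" by blast
  also have "\<dots> = {mmul p A B, mneg p (mmul p A B)}"
    using assms by (simp add: mneg_l mneg_r mneg_mneg mmul_SL2 mneg_SL2 insert_commute)
  finally show ?thesis by (simp add: PSL2_sq_def cls_def psl_mult_def)
qed

lemma group_G: "group G"
proof (rule groupI)
  fix x y z assume xyz: "x \<in> carrier G" "y \<in> carrier G" "z \<in> carrier G"
  then obtain A B C where ABC: "A \<in> SL2 p" "B \<in> SL2 p" "C \<in> SL2 p" "x = cls A" "y = cls B" "z = cls C"
    unfolding carrier_G by blast
  show "x \<otimes>\<^bsub>G\<^esub> y \<in> carrier G" using ABC by (simp add: mult_G carrier_G mmul_SL2)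
  show "x \<otimes>\<^bsub>G\<^esub> y \<otimes>\<^bsub>G\<^esub> z = x \<otimes>\<^bsub>G\<^esub> (y \<otimes>\<^bsub>G\<^esub> z)"
    using ABC by (simp add: mult_G mmul_SL2 mmul_assoc)
  show "\<one>\<^bsub>G\<^esub> \<otimes>\<^bsub>G\<^esub> x = x" using ABC by (simp add: one_G mult_G mid_SL2 mid_l)
  show "\<exists>y\<in>carrier G. y \<otimes>\<^bsub>G\<^esub> x = \<one>\<^bsub>G\<^esub>"
    using ABC by (intro bexI[of _ "cls (madj A)"]) (simp_all add: one_G mult_G madj_SL2 madj_l carrier_G)
next
  show "\<one>\<^bsub>G\<^esub> \<in> carrier G" by (simp add: one_G carrier_G mid_SL2)
qed

sublocale GG: group G by (rule group_G)

lemma inv_G: "A \<in> SL2 p \<Longrightarrow> inv\<^bsub>G\<^esub> (cls A) = cls (madj A)"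
  by (rule GG.inv_equality) (simp_all add: one_G mult_G madj_SL2 madj_l carrier_G)


lemma cls_eq: "cls A = cls M \<Longrightarrow> A = M \<or> A = mneg p M"
  unfolding cls_def by blast

lemma inv_subgroup:
  assumes P1: "P mid"
    and P2: "\<And>A B. A \<in> SL2 p \<Longrightarrow> B \<in> SL2 p \<Longrightarrow> P A \<Longrightarrow> P B \<Longrightarrow> P (mmul p A B)"
    and P3: "\<And>A. A \<in> SL2 p \<Longrightarrow> P A \<Longrightarrow> P (madj A)"
  shows "subgroup (cls ` {M \<in> SL2 p. P M}) G"
proof (rule GG.subgroupI)
  show "cls ` {M \<in> SL2 p. P M} \<subseteq> carrier G" by (auto simp: carrier_G)
  show "cls ` {M \<in> SL2 p. P M} \<noteq> {}" using P1 mid_SL2 by blast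
  fix x y assume x: "x \<in> cls ` {M \<in> SL2 p. P M}" and y: "y \<in> cls ` {M \<in> SL2 p. P M}"
  then obtain A B where AB: "A \<in> SL2 p" "P A" "x = cls A" "B \<in> SL2 p" "P B" "y = cls B" by blast
  show "inv\<^bsub>G\<^esub> x \<in> cls ` {M \<in> SL2 p. P M}"
    using AB by (auto simp: inv_G intro!: imageI madj_SL2 P3)
  show "x \<otimes>\<^bsub>G\<^esub> y \<in> cls ` {M \<in> SL2 p. P M}"
    using AB by (auto simp: mult_G intro!: imageI mmul_SL2 P2)
qed

lemma notin_inv:
  assumes "A \<in> SL2 p" "\<not> P A" "\<not> P (mneg p A)" "\<And>M. M \<in> SL2 p \<Longrightarrow> P M \<Longrightarrow> P (mneg p M)"
  shows "cls A \<notin> cls ` {M \<in> SL2 p. P M}"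
proof
  assume "cls A \<in> cls ` {M \<in> SL2 p. P M}"
  then obtain M where M: "M \<in> SL2 p" "P M" "cls A = cls M" by blast
  from cls_eq[OF M(3)] show False using assms(2) assms(4)[OF M(1,2)] M(2) by auto
qed

lemma gen_le:
  assumes "subgroup K G" "S \<subseteq> K" "x \<in> carrier G" "x \<notin> K"
  shows "generate G S \<noteq> carrier G"
  using GG.generate_subgroup_incl[OF assms(2,1)] assms(3,4) by blast

fun P1 :: "mat2 \<Rightarrow> bool" where
  "P1 ((a1,a2),(b1,b2),(c1,c2),(d1,d2)) \<longleftrightarrow> a2 = 0 \<and> b2 = 0 \<and> c2 = 0 \<and> d2 = 0"
fun P2 :: "mat2 \<Rightarrow> bool" where
  "P2 (a,b,c,d) \<longleftrightarrow> c = (0,0)"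
fun P3 :: "mat2 \<Rightarrow> bool" where
  "P3 ((a1,a2),(b1,b2),(c1,c2),(d1,d2)) \<longleftrightarrow> (a2 = 0 \<and> d2 = 0 \<and> b1 = 0 \<and> c1 = 0) \<or> (a1 = 0 \<and> d1 = 0 \<and> b2 = 0 \<and> c2 = 0)"

lemma sub1: "subgroup (cls ` {M \<in> SL2 p. P1 M}) G"
proof (rule inv_subgroup)
  show "P1 mid" by (simp add: mid_def)
  fix A B assume "A \<in> SL2 p" "B \<in> SL2 p" "P1 A" "P1 B"
  then show "P1 (mmul p A B)"
    by (cases A; cases B) (auto simp: mmul.simps)
next
  fix A assume "A \<in> SL2 p" "P1 A"
  then show "P1 (madj A)" by (cases A) auto
qed

lemma sub2: "subgroup (cls ` {M \<in> SL2 p. P2 M}) G"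
proof (rule inv_subgroup)
  show "P2 mid" by (simp add: mid_def)
  fix A B assume "A \<in> SL2 p" "B \<in> SL2 p" "P2 A" "P2 B"
  then show "P2 (mmul p A B)"
    by (cases A; cases B) (auto simp: mmul.simps)
next
  fix A assume "A \<in> SL2 p" "P2 A"
  then show "P2 (madj A)" by (cases A) auto
qed

lemma sub3: "subgroup (cls ` {M \<in> SL2 p. P3 M}) G"
proof (rule inv_subgroup)
  show "P3 mid" by (simp add: mid_def)
  fix A B assume "A \<in> SL2 p" "B \<in> SL2 p" "P3 A" "P3 B"
  then show "P3 (mmul p A B)"
    by (cases A; cases B) (auto simp: mmul.simps)
next
  fix A assume "A \<in> SL2 p" "P3 A"
  then show "P3 (madj A)" by (cases A) auto
qed

lemma P1_neg: "P1 M \<Longrightarrow> P1 (mneg p M)" by (cases M) (auto simp: mneg.simps)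
lemma P2_neg: "P2 M \<Longrightarrow> P2 (mneg p M)" by (cases M) (auto simp: mneg.simps)
lemma P3_neg: "P3 M \<Longrightarrow> P3 (mneg p M)" by (cases M) (auto simp: mneg.simps)

end




definition mA :: mat2 where "mA = ((1,0),(1,0),(0,0),(1,0))"
definition mB :: mat2 where "mB = ((1,0),(0,1),(0,0),(1,0))"
definition mC :: "int \<Rightarrow> mat2" where "mC p = ((0,0),(1,0),(p-1,0),(0,0))"
definition Uf :: "fe \<Rightarrow> mat2" where "Uf t = ((1,0),t,(0,0),(1,0))"
definition Lf :: "fe \<Rightarrow> mat2" where "Lf t = ((1,0),(0,0),t,(1,0))"

context qf
begin

lemma Uf_F: "Uf t = (\<one>\<^bsub>FF\<^esub>, t, \<zero>\<^bsub>FF\<^esub>, \<one>\<^bsub>FF\<^esub>)" by (simp add: Uf_def Fr_simps)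
lemma Lf_F: "Lf t = (\<one>\<^bsub>FF\<^esub>, \<zero>\<^bsub>FF\<^esub>, t, \<one>\<^bsub>FF\<^esub>)" by (simp add: Lf_def Fr_simps)

lemma Uf_SL2: "t \<in> carrier FF \<Longrightarrow> Uf t \<in> SL2 p"
  by (simp add: Uf_F SL2_iff F.minus_eq)
lemma Lf_SL2: "t \<in> carrier FF \<Longrightarrow> Lf t \<in> SL2 p"
  by (simp add: Lf_F SL2_iff F.minus_eq)

lemma Uf_mul: "mmul p (Uf (x1,y1)) (Uf (x2,y2)) = Uf ((x1+x2) mod p, (y1+y2) mod p)"
  using p_gt by (simp add: Uf_def mmul.simps mod_simps add.commute)

lemma mA_U: "mA = Uf (1,0)" by (simp add: mA_def Uf_def)
lemma mB_U: "mB = Uf (0,1)" by (simp add: mB_def Uf_def)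

lemma one_in_F: "(1::int,0::int) \<in> carrier FF" "(0::int,1::int) \<in> carrier FF"
  using p_gt by (auto simp: Fr_simps fel_def)

lemma mC_F: "mC p = (\<zero>\<^bsub>FF\<^esub>, \<one>\<^bsub>FF\<^esub>, \<ominus>\<^bsub>FF\<^esub> \<one>\<^bsub>FF\<^esub>, \<zero>\<^bsub>FF\<^esub>)"
proof -
  have "fneg p (1,0) = (p-1, 0)" using p_gt by (simp add: zmod_zminus1_eq_if)
  then have "(p-1,0) = \<ominus>\<^bsub>FF\<^esub> \<one>\<^bsub>FF\<^esub>" using fneg_F[of "(1,0)"] one_in_F by (simp add: Fr_simps)
  then show ?thesis by (simp add: mC_def Fr_simps)
qed

lemma mC_SL2: "mC p \<in> SL2 p"
  by (simp add: mC_F SL2_iff F.minus_eq F.l_minus F.r_minus)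

end

locale qf2 = qf +
  assumes inv_ex: "\<And>x. x \<in> carrier (Fr p) \<Longrightarrow> x \<noteq> \<zero>\<^bsub>Fr p\<^esub> \<Longrightarrow> \<exists>y\<in>carrier (Fr p). x \<otimes>\<^bsub>Fr p\<^esub> y = \<one>\<^bsub>Fr p\<^esub>"
begin

abbreviation H where "H \<equiv> generate G {cls mA, cls mB, cls (mC p)}"

lemma H_mult: "A \<in> SL2 p \<Longrightarrow> B \<in> SL2 p \<Longrightarrow> cls A \<in> H \<Longrightarrow> cls B \<in> H \<Longrightarrow> cls (mmul p A B) \<in> H"
  by (metis mult_G generate.eng)

lemma U_in1: "cls (Uf (int n mod p, 0)) \<in> H"
proof (induction n)
  case 0
  have "Uf (0,0) = mid" by (simp add: Uf_def mid_def)
  then show ?case using generate.one[of G] by (simp add: one_G)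
next
  case (Suc n)
  have "Uf (int (Suc n) mod p, 0) = mmul p (Uf (int n mod p, 0)) mA"
    by (simp add: mA_U Uf_mul mod_simps add.commute)
  moreover have "cls mA \<in> H" by (simp add: generate.incl)
  moreover have "Uf (int n mod p, 0) \<in> SL2 p" "mA \<in> SL2 p"
    using p_gt by (auto intro!: Uf_SL2 simp: mA_U Fr_simps fel_def)
  ultimately show ?case using Suc H_mult by metis
qed

lemma U_in2: assumes "0 \<le> a" "a < p" shows "cls (Uf (a, int n mod p)) \<in> H"
proof (induction n)
  case 0
  then show ?case using U_in1[of "nat a"] assms by simp
next
  case (Suc n)
  have "Uf (a, int (Suc n) mod p) = mmul p (Uf (a, int n mod p)) mB"
    using assms by (simp add: mB_U Uf_mul mod_simps add.commute)
  moreover have "cls mB \<in> H" by (simp add: generate.incl)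
  moreover have "Uf (a, int n mod p) \<in> SL2 p" "mB \<in> SL2 p"
    using p_gt assms by (auto intro!: Uf_SL2 simp: mB_U Fr_simps fel_def)
  ultimately show ?case using Suc H_mult by metis
qed

lemma U_in: assumes "t \<in> carrier FF" shows "cls (Uf t) \<in> H"
proof -
  obtain a b where t: "t = (a,b)" "0 \<le> a" "a < p" "0 \<le> b" "b < p"
    using assms by (cases t) (auto simp: Fr_simps fel_def)
  show ?thesis using U_in2[of a "nat b"] t by simp
qed


lemma C_conj: assumes "t \<in> carrier FF"
  shows "mmul p (mmul p (mC p) (Uf t)) (madj (mC p)) = Lf (\<ominus>\<^bsub>FF\<^esub> t)"
proof -
  have m1: "\<ominus>\<^bsub>FF\<^esub> \<one>\<^bsub>FF\<^esub> \<in> carrier FF" by simp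
  have "madj (mC p) = (\<zero>\<^bsub>FF\<^esub>, \<ominus>\<^bsub>FF\<^esub> \<one>\<^bsub>FF\<^esub>, \<ominus>\<^bsub>FF\<^esub> (\<ominus>\<^bsub>FF\<^esub> \<one>\<^bsub>FF\<^esub>), \<zero>\<^bsub>FF\<^esub>)"
    using m1 by (simp add: mC_F fneg_F Fops del: F.minus_minus)
  then show ?thesis using assms
    by (simp only: mC_F Uf_F Lf_F mmul_F prod.inject) (safe; algebra)
qed

lemma L_in: assumes "s \<in> carrier FF" shows "cls (Lf s) \<in> H"
proof -
  have t: "\<ominus>\<^bsub>FF\<^esub> s \<in> carrier FF" using assms by simp
  have "Lf s = mmul p (mmul p (mC p) (Uf (\<ominus>\<^bsub>FF\<^esub> s))) (madj (mC p))"
    using C_conj[OF t] assms by simp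
  moreover have "cls (mC p) \<in> H" by (simp add: generate.incl)
  moreover have "cls (madj (mC p)) \<in> H"
    using generate.inv[of "cls (mC p)" "{cls mA, cls mB, cls (mC p)}" G] by (simp add: inv_G mC_SL2)
  moreover have "cls (Uf (\<ominus>\<^bsub>FF\<^esub> s)) \<in> H" using U_in[OF t] .
  ultimately show ?thesis using H_mult mC_SL2 Uf_SL2[OF t] madj_SL2 mmul_SL2 by metis
qed

lemma case1: assumes M: "M \<in> SL2 p" "M = (a,b,c,d)" and c0: "c \<noteq> \<zero>\<^bsub>FF\<^esub>" shows "cls M \<in> H"
proof -
  have ca: "a \<in> carrier FF" "b \<in> carrier FF" "c \<in> carrier FF" "d \<in> carrier FF"
   and det: "a \<otimes>\<^bsub>FF\<^esub> d \<ominus>\<^bsub>FF\<^esub> b \<otimes>\<^bsub>FF\<^esub> c = \<one>\<^bsub>FF\<^esub>"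
    using M(1) unfolding M(2) SL2_iff by auto
  obtain ci where ci: "ci \<in> carrier FF" "c \<otimes>\<^bsub>FF\<^esub> ci = \<one>\<^bsub>FF\<^esub>" using inv_ex[OF ca(3) c0] by blast
  define x where "x = (a \<ominus>\<^bsub>FF\<^esub> \<one>\<^bsub>FF\<^esub>) \<otimes>\<^bsub>FF\<^esub> ci"
  define y where "y = (d \<ominus>\<^bsub>FF\<^esub> \<one>\<^bsub>FF\<^esub>) \<otimes>\<^bsub>FF\<^esub> ci"
  have xy: "x \<in> carrier FF" "y \<in> carrier FF" using ca ci by (simp_all add: x_def y_def)
  have gen: "mmul p (mmul p (Uf x) (Lf c)) (Uf y) =
     (\<one>\<^bsub>FF\<^esub> \<oplus>\<^bsub>FF\<^esub> x \<otimes>\<^bsub>FF\<^esub> c,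
      a \<otimes>\<^bsub>FF\<^esub> y \<oplus>\<^bsub>FF\<^esub> x \<oplus>\<^bsub>FF\<^esub> (x \<otimes>\<^bsub>FF\<^esub> c \<ominus>\<^bsub>FF\<^esub> (a \<ominus>\<^bsub>FF\<^esub> \<one>\<^bsub>FF\<^esub>)) \<otimes>\<^bsub>FF\<^esub> y,
      c, c \<otimes>\<^bsub>FF\<^esub> y \<oplus>\<^bsub>FF\<^esub> \<one>\<^bsub>FF\<^esub>)"
    using xy ca by (simp only: Uf_F Lf_F mmul_F prod.inject) (safe; algebra?; simp)
  have e0: "x \<otimes>\<^bsub>FF\<^esub> c = (a \<ominus>\<^bsub>FF\<^esub> \<one>\<^bsub>FF\<^esub>) \<otimes>\<^bsub>FF\<^esub> (c \<otimes>\<^bsub>FF\<^esub> ci)"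
    unfolding x_def using ca ci(1) by algebra
  then have e0': "x \<otimes>\<^bsub>FF\<^esub> c = a \<ominus>\<^bsub>FF\<^esub> \<one>\<^bsub>FF\<^esub>" using ci ca by simp
  have e1: "\<one>\<^bsub>FF\<^esub> \<oplus>\<^bsub>FF\<^esub> (a \<ominus>\<^bsub>FF\<^esub> \<one>\<^bsub>FF\<^esub>) = a" using ca by algebra
  have e2: "a \<otimes>\<^bsub>FF\<^esub> y \<oplus>\<^bsub>FF\<^esub> x = (a \<otimes>\<^bsub>FF\<^esub> d \<ominus>\<^bsub>FF\<^esub> b \<otimes>\<^bsub>FF\<^esub> c \<ominus>\<^bsub>FF\<^esub> \<one>\<^bsub>FF\<^esub>) \<otimes>\<^bsub>FF\<^esub> ci \<oplus>\<^bsub>FF\<^esub> b \<otimes>\<^bsub>FF\<^esub> (c \<otimes>\<^bsub>FF\<^esub> ci)"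
    unfolding x_def y_def using ca ci(1) F.r_one by algebra
  have e2': "(\<one>\<^bsub>FF\<^esub> \<ominus>\<^bsub>FF\<^esub> \<one>\<^bsub>FF\<^esub>) \<otimes>\<^bsub>FF\<^esub> ci \<oplus>\<^bsub>FF\<^esub> b \<otimes>\<^bsub>FF\<^esub> \<one>\<^bsub>FF\<^esub> = b"
    using ca ci(1) F.r_one by algebra
  have e3: "c \<otimes>\<^bsub>FF\<^esub> y = (d \<ominus>\<^bsub>FF\<^esub> \<one>\<^bsub>FF\<^esub>) \<otimes>\<^bsub>FF\<^esub> (c \<otimes>\<^bsub>FF\<^esub> ci)"
    unfolding y_def using ca ci(1) by algebra
  have e3': "(d \<ominus>\<^bsub>FF\<^esub> \<one>\<^bsub>FF\<^esub>) \<oplus>\<^bsub>FF\<^esub> \<one>\<^bsub>FF\<^esub> = d" using ca F.r_one by algebra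
  have z: "(a \<ominus>\<^bsub>FF\<^esub> \<one>\<^bsub>FF\<^esub> \<ominus>\<^bsub>FF\<^esub> (a \<ominus>\<^bsub>FF\<^esub> \<one>\<^bsub>FF\<^esub>)) \<otimes>\<^bsub>FF\<^esub> y = \<zero>\<^bsub>FF\<^esub>"
    using ca xy by algebra
  have "M = mmul p (mmul p (Uf x) (Lf c)) (Uf y)"
    unfolding gen using e0' e1 e2 e2' e3 e3' z det ci ca xy M(2) by simp
  moreover have "cls (Uf x) \<in> H" "cls (Lf c) \<in> H" "cls (Uf y) \<in> H"
    using U_in L_in xy ca by auto
  ultimately show ?thesis using H_mult Uf_SL2 Lf_SL2 mmul_SL2 xy ca by metis
qed

lemma all_in: assumes M: "M \<in> SL2 p" shows "cls M \<in> H"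
proof -
  obtain a b c d where Md: "M = (a,b,c,d)" by (cases M) auto
  have ca: "a \<in> carrier FF" "b \<in> carrier FF" "c \<in> carrier FF" "d \<in> carrier FF"
   and det: "a \<otimes>\<^bsub>FF\<^esub> d \<ominus>\<^bsub>FF\<^esub> b \<otimes>\<^bsub>FF\<^esub> c = \<one>\<^bsub>FF\<^esub>"
    using M unfolding Md SL2_iff by auto
  show ?thesis
  proof (cases "c = \<zero>\<^bsub>FF\<^esub>")
    case False
    then show ?thesis using case1[OF M Md] by simp
  next
    case True
    have one_ne: "\<one>\<^bsub>FF\<^esub> \<noteq> \<zero>\<^bsub>FF\<^esub>" by (simp add: Fr_simps)
    have a0: "a \<noteq> \<zero>\<^bsub>FF\<^esub>"
    proof
      assume "a = \<zero>\<^bsub>FF\<^esub>"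
      then have "a \<otimes>\<^bsub>FF\<^esub> d \<ominus>\<^bsub>FF\<^esub> b \<otimes>\<^bsub>FF\<^esub> c = \<zero>\<^bsub>FF\<^esub>" using True ca by (simp add: F.minus_eq)
      then show False using det one_ne by simp
    qed
    have o: "\<one>\<^bsub>FF\<^esub> \<in> carrier FF" "\<ominus>\<^bsub>FF\<^esub> \<one>\<^bsub>FF\<^esub> \<in> carrier FF" by simp_all
    define M' where "M' = mmul p (Lf \<one>\<^bsub>FF\<^esub>) M"
    have M'S: "M' \<in> SL2 p" unfolding M'_def using mmul_SL2 Lf_SL2 o M by blast
    have M'd: "M' = (\<one>\<^bsub>FF\<^esub> \<otimes>\<^bsub>FF\<^esub> a \<oplus>\<^bsub>FF\<^esub> \<zero>\<^bsub>FF\<^esub> \<otimes>\<^bsub>FF\<^esub> c,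
        \<one>\<^bsub>FF\<^esub> \<otimes>\<^bsub>FF\<^esub> b \<oplus>\<^bsub>FF\<^esub> \<zero>\<^bsub>FF\<^esub> \<otimes>\<^bsub>FF\<^esub> d,
        \<one>\<^bsub>FF\<^esub> \<otimes>\<^bsub>FF\<^esub> a \<oplus>\<^bsub>FF\<^esub> \<one>\<^bsub>FF\<^esub> \<otimes>\<^bsub>FF\<^esub> c,
        \<one>\<^bsub>FF\<^esub> \<otimes>\<^bsub>FF\<^esub> b \<oplus>\<^bsub>FF\<^esub> \<one>\<^bsub>FF\<^esub> \<otimes>\<^bsub>FF\<^esub> d)"
      unfolding M'_def Md Lf_F mmul_F by simp
    have cc: "\<one>\<^bsub>FF\<^esub> \<otimes>\<^bsub>FF\<^esub> a \<oplus>\<^bsub>FF\<^esub> \<one>\<^bsub>FF\<^esub> \<otimes>\<^bsub>FF\<^esub> c \<noteq> \<zero>\<^bsub>FF\<^esub>"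
      using True ca a0 by simp
    have H1: "cls M' \<in> H" using case1[OF M'S M'd cc] .
    have LL: "mmul p (Lf (\<ominus>\<^bsub>FF\<^esub> \<one>\<^bsub>FF\<^esub>)) (Lf \<one>\<^bsub>FF\<^esub>) = mid"
      by (simp only: Lf_F mid_F mmul_F prod.inject) (safe; algebra)
    have "mmul p (Lf (\<ominus>\<^bsub>FF\<^esub> \<one>\<^bsub>FF\<^esub>)) M' = M"
      unfolding M'_def using mmul_assoc[OF Lf_SL2[OF o(2)] Lf_SL2[OF o(1)] M] LL mid_l[OF M] by simp
    moreover have "cls (Lf (\<ominus>\<^bsub>FF\<^esub> \<one>\<^bsub>FF\<^esub>)) \<in> H" using L_in[OF o(2)] .
    ultimately show ?thesis using H_mult[OF Lf_SL2[OF o(2)] M'S] H1 by metis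
  qed
qed

lemma H_eq: "H = carrier G"
proof
  show "H \<subseteq> carrier G"
    by (rule GG.generate_incl) (auto simp: carrier_G mA_U mB_U one_in_F intro!: Uf_SL2 mC_SL2)
  show "carrier G \<subseteq> H" using all_in by (auto simp: carrier_G)
qed

end




lemma two_nonres_nat:
  fixes q :: nat
  assumes q: "Factorial_Ring.prime q" "q mod 8 = 3 \<or> q mod 8 = 5"
  shows "\<not> QuadRes (int q) 2"
proof -
  have q2: "2 < q" using prime_ge_2_nat[OF q(1)] q(2) by (cases "q = 2") auto
  have n2: "[2 \<noteq> 0] (mod int q)"
  proof
    assume "[2 = 0] (mod int q)"
    then have "int q dvd 2" by (simp add: cong_0_iff)
    then show False using q2 by (simp add: zdvd_not_zless)
  qed
  interpret GAUSS q 2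
    by unfold_locales (use q(1) q2 n2 in auto)
  define h where "h = (int q - 1) div 2"
  have C: "C = (\<lambda>x. x * 2) ` A"
  proof -
    have "\<And>x. x \<in> A \<Longrightarrow> (x * 2) mod int q = x * 2"
      using q2 by (auto simp: A_def)
    then show ?thesis unfolding C_def B_def image_image by (rule image_cong[OF refl])
  qed
  have E: "E = (\<lambda>x. x * 2) ` {h div 2 <.. h}"
  proof -
    have "E = (\<lambda>x. x * 2) ` {x \<in> A. h < x * 2}"
      unfolding E_def C h_def by auto
    also have "{x \<in> A. h < x * 2} = {h div 2 <.. h}"
      unfolding A_def h_def by (auto; presburger)
    finally show ?thesis .
  qed
  have cE: "card E = nat (h - h div 2)"
    unfolding E by (subst card_image) (auto simp: inj_on_def)
  have oddE: "odd (card E)"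
  proof -
    have "q = 8 * (q div 8) + 3 \<or> q = 8 * (q div 8) + 5" using q(2) by presburger
    then have "int q = 8 * int (q div 8) + 3 \<or> int q = 8 * int (q div 8) + 5" by linarith
    then have "odd (h - h div 2)" unfolding h_def by presburger
    moreover have "h - h div 2 \<ge> 0" unfolding h_def by auto
    ultimately show ?thesis unfolding cE by (simp add: even_nat_iff)
  qed
  have "Legendre 2 (int q) = -1" using gauss_lemma oddE by simp
  then show ?thesis unfolding Legendre_def by (auto split: if_splits)
qed

lemma two_nonres:
  fixes p :: int
  assumes "Factorial_Ring.prime p" "p mod 8 = 3 \<or> p mod 8 = 5"
  shows "\<not> QuadRes p 2"
proof -
  have p0: "p \<ge> 0" using assms(1) by (simp add: prime_ge_0_int)
  have "Factorial_Ring.prime (nat p)" using assms(1) by simp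
  moreover have "nat p mod 8 = 3 \<or> nat p mod 8 = 5" using assms(2) p0
    by (metis nat_mod_distrib nat_numeral zero_le_numeral nat_one_as_int)
  ultimately show ?thesis using two_nonres_nat[of "nat p"] p0 by simp
qed




context qf
begin

lemma small_dvd: assumes "0 \<le> b" "b < p" "p dvd b" shows "b = 0"
proof (rule ccontr)
  assume "b \<noteq> 0"
  then have "0 < b" using assms(1) by simp
  then have "p \<le> b" using zdvd_imp_le[OF assms(3)] by simp
  then show False using assms(2) by simp
qed

lemma inv_ex_lem:
  assumes pr: "Factorial_Ring.prime p" and nr: "\<not> QuadRes p 2"
    and x: "x \<in> carrier FF" "x \<noteq> \<zero>\<^bsub>FF\<^esub>"
  shows "\<exists>y\<in>carrier FF. x \<otimes>\<^bsub>FF\<^esub> y = \<one>\<^bsub>FF\<^esub>"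
proof -
  obtain a b where ab: "x = (a,b)" "0 \<le> a" "a < p" "0 \<le> b" "b < p"
    using x(1) by (cases x) (auto simp: Fr_simps fel_def)
  have nz: "a \<noteq> 0 \<or> b \<noteq> 0" using x(2) ab(1) by (auto simp: Fr_simps)
  have nd: "\<not> p dvd (a*a - 2*b*b)"
  proof
    assume d: "p dvd (a*a - 2*b*b)"
    show False
    proof (cases "p dvd b")
      case True
      then have b0: "b = 0" using small_dvd ab by blast
      then have "p dvd a * a" using d by simp
      then have "p dvd a" using pr by (simp add: prime_dvd_mult_iff)
      then have "a = 0" using small_dvd ab by blast
      then show False using nz b0 by simp
    next
      case False
      then have "coprime b p" using prime_imp_coprime[OF pr] by (simp add: coprime_commute)
      then obtain bi where bi: "[b * bi = 1] (mod p)" using cong_solve_coprime_int by blast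
      have c1: "[a*a = 2*b*b] (mod p)" using d by (simp add: cong_iff_dvd_diff)
      have "[(a*bi)^2 = (a*a)*(bi*bi)] (mod p)" by (simp add: power2_eq_square algebra_simps)
      also have "[(a*a)*(bi*bi) = (2*b*b)*(bi*bi)] (mod p)" by (rule cong_mult[OF c1 cong_refl])
      also have "(2*b*b)*(bi*bi) = 2*(b*bi)*(b*bi)" by (simp add: algebra_simps)
      also have "[2*(b*bi)*(b*bi) = 2*1*1] (mod p)" by (intro cong_mult cong_refl bi)
      finally have "[(a*bi)^2 = 2] (mod p)" by simp
      then show False using nr unfolding QuadRes_def by blast
    qed
  qed
  define N where "N = a*a - 2*b*b"
  have "coprime N p" using nd prime_imp_coprime[OF pr, of N] unfolding N_def by (simp add: coprime_commute)
  then obtain Ni where Ni: "[N * Ni = 1] (mod p)" using cong_solve_coprime_int by blast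
  define y where "y = ((a*Ni) mod p, (-(b*Ni)) mod p)"
  have yin: "y \<in> carrier FF" using p_gt by (simp add: y_def Fr_simps fel_def)
  have m1: "[a * ((a*Ni) mod p) + 2 * b * ((-(b*Ni)) mod p) = a * (a*Ni) + 2*b*(-(b*Ni))] (mod p)"
    by (intro cong_add cong_mult cong_refl) (simp_all add: cong_def)
  also have "a * (a*Ni) + 2*b*(-(b*Ni)) = N * Ni" by (simp add: N_def algebra_simps)
  also note Ni
  finally have e1: "(a * ((a*Ni) mod p) + 2 * b * ((-(b*Ni)) mod p)) mod p = 1"
    using p_gt by (simp add: cong_def)
  have m2: "[a * ((-(b*Ni)) mod p) + b * ((a*Ni) mod p) = a * (-(b*Ni)) + b * (a*Ni)] (mod p)"
    by (intro cong_add cong_mult cong_refl) (simp_all add: cong_def)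
  also have "a * (-(b*Ni)) + b * (a*Ni) = 0" by (simp add: algebra_simps)
  finally have e2: "(a * ((-(b*Ni)) mod p) + b * ((a*Ni) mod p)) mod p = 0"
    by (simp add: cong_def)
  have "fmul p (a,b) y = (1,0)" unfolding y_def by (simp only: fmul.simps e1 e2)
  then have "x \<otimes>\<^bsub>FF\<^esub> y = \<one>\<^bsub>FF\<^esub>" by (simp only: Fr_simps ab(1))
  then show ?thesis using yin by blast
qed

end




definition mg :: "int \<Rightarrow> mat2" where "mg p = ((2,0),(0,0),(0,0),((p+1) div 2,0))"

lemma notin_inv2:
  assumes "qf p" "A \<in> SL2 p" "\<not> P A" "\<And>M. P M \<Longrightarrow> P (mneg p M)"
  shows "qf.cls p A \<notin> qf.cls p ` {M \<in> SL2 p. P M}"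
proof
  assume "qf.cls p A \<in> qf.cls p ` {M \<in> SL2 p. P M}"
  then obtain M where M: "M \<in> SL2 p" "P M" "qf.cls p A = qf.cls p M" by blast
  from qf.cls_eq[OF assms(1) M(3)] show False using assms(3) assms(4)[OF M(2)] M(2) by auto
qed

lemma sel0: "x1 \<in> T \<Longrightarrow> x2 \<in> T \<Longrightarrow> {[x0,x1,x2] ! j |j. j < length [x0,x1,x2] \<and> j \<noteq> 0} \<subseteq> T"
  by (auto simp: less_Suc_eq numeral_3_eq_3)
lemma sel1: "x0 \<in> T \<Longrightarrow> x2 \<in> T \<Longrightarrow> {[x0,x1,x2] ! j |j. j < length [x0,x1,x2] \<and> j \<noteq> 1} \<subseteq> T"
  by (auto simp: less_Suc_eq numeral_3_eq_3)
lemma sel2: "x0 \<in> T \<Longrightarrow> x1 \<in> T \<Longrightarrow> {[x0,x1,x2] ! j |j. j < length [x0,x1,x2] \<and> j \<noteq> 2} \<subseteq> T"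
  by (auto simp: less_Suc_eq numeral_3_eq_3)

lemma lt3: "i < (3::nat) \<Longrightarrow> i = 0 \<or> i = 1 \<or> i = 2" by presburger

lemma inTI: "M \<in> SL2 p \<Longrightarrow> P M \<Longrightarrow> f M \<in> f ` {M \<in> SL2 p. P M}"
  by blast

theorem theorem2p1:
  fixes p :: int
  assumes "Factorial_Ring.prime p" and "p \<ge> 7" and "p mod 8 = 3 \<or> p mod 8 = 5"
    and "max_irr_len (PSL2_sq p) = 3"
  shows "\<not> replacement_property (PSL2_sq p)"
proof -
  have Q: "qf p" by (unfold_locales) (use assms(2) in auto)
  interpret Q: qf "residue_ring p" p by (rule Q)
  interpret Q2: qf2 "residue_ring p" p
    by unfold_locales (use Q.inv_ex_lem[OF assms(1) two_nonres[OF assms(1,3)]] in auto)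
  let ?G = "PSL2_sq p"
  let ?T1 = "Q.cls ` {M \<in> SL2 p. Q.P1 M}"
  let ?T2 = "Q.cls ` {M \<in> SL2 p. Q.P2 M}"
  let ?T3 = "Q.cls ` {M \<in> SL2 p. Q.P3 M}"
  have podd: "2 * ((p + 1) div 2) = p + 1" using assms(3) by presburger
  have SA: "mA \<in> SL2 p" "mB \<in> SL2 p" "mC p \<in> SL2 p"
    using Q.Uf_SL2 Q.one_in_F Q.mC_SL2 by (auto simp: Q.mA_U Q.mB_U)
  have SG: "mg p \<in> SL2 p"
    using assms(2) podd by (simp add: mg_def SL2_def fel_def mod_simps)
  define s where "s = [Q.cls mA, Q.cls mB, Q.cls (mC p)]"
  define g where "g = Q.cls (mg p)"
  have PA: "\<not> Q.P3 mA" "Q.P1 mA" "Q.P2 mA" by (simp_all add: mA_def)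
  have PB: "\<not> Q.P1 mB" "Q.P2 mB" "Q.P3 mB" by (simp_all add: mB_def)
  have PC: "\<not> Q.P2 (mC p)" "Q.P1 (mC p)" "Q.P3 (mC p)" using assms(2) by (simp_all add: mC_def)
  have PG: "Q.P1 (mg p)" "Q.P2 (mg p)" "Q.P3 (mg p)" by (simp_all add: mg_def)
  have nA: "Q.cls mA \<notin> ?T3" by (rule notin_inv2[OF Q SA(1) PA(1) Q.P3_neg])
  have nB: "Q.cls mB \<notin> ?T1" by (rule notin_inv2[OF Q SA(2) PB(1) Q.P1_neg])
  have nC: "Q.cls (mC p) \<notin> ?T2" by (rule notin_inv2[OF Q SA(3) PC(1) Q.P2_neg])
  have cA: "Q.cls mA \<in> carrier ?G" "Q.cls mB \<in> carrier ?G" "Q.cls (mC p) \<in> carrier ?G"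
    using SA by (auto simp: Q.carrier_G)
  have cg: "g \<in> carrier ?G" using SG by (auto simp: Q.carrier_G g_def)
  have inT: "Q.cls mA \<in> ?T1" "Q.cls mA \<in> ?T2" "Q.cls mB \<in> ?T2" "Q.cls mB \<in> ?T3"
     "Q.cls (mC p) \<in> ?T1" "Q.cls (mC p) \<in> ?T3" "g \<in> ?T1" "g \<in> ?T2" "g \<in> ?T3"
    unfolding g_def
    by (rule inTI, (rule SA SG PA PB PC PG)+)+
  have irr: "irredundant_gen_seq ?G s"
  proof -
    have i0: "s ! 0 \<notin> generate ?G {s ! j |j. j < length s \<and> j \<noteq> 0}"
    proof -
      have "{s ! j |j. j < length s \<and> j \<noteq> 0} \<subseteq> ?T3"
        unfolding s_def by (rule sel0[OF inT(4) inT(6)])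
      then have "generate ?G {s ! j |j. j < length s \<and> j \<noteq> 0} \<subseteq> ?T3"
        by (rule Q.GG.generate_subgroup_incl[OF _ Q.sub3])
      moreover have "s ! 0 = Q.cls mA" by (simp add: s_def)
      ultimately show ?thesis using nA by blast
    qed
    have i1: "s ! 1 \<notin> generate ?G {s ! j |j. j < length s \<and> j \<noteq> 1}"
    proof -
      have "{s ! j |j. j < length s \<and> j \<noteq> 1} \<subseteq> ?T1"
        unfolding s_def by (rule sel1[OF inT(1) inT(5)])
      then have "generate ?G {s ! j |j. j < length s \<and> j \<noteq> 1} \<subseteq> ?T1"
        by (rule Q.GG.generate_subgroup_incl[OF _ Q.sub1])
      moreover have "s ! 1 = Q.cls mB" by (simp add: s_def)
      ultimately show ?thesis using nB by blast
    qed
    have i2: "s ! 2 \<notin> generate ?G {s ! j |j. j < length s \<and> j \<noteq> 2}"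
    proof -
      have "{s ! j |j. j < length s \<and> j \<noteq> 2} \<subseteq> ?T2"
        unfolding s_def by (rule sel2[OF inT(2) inT(3)])
      then have "generate ?G {s ! j |j. j < length s \<and> j \<noteq> 2} \<subseteq> ?T2"
        by (rule Q.GG.generate_subgroup_incl[OF _ Q.sub2])
      moreover have "s ! 2 = Q.cls (mC p)" by (simp add: s_def)
      ultimately show ?thesis using nC by blast
    qed
    have "\<forall>i<length s. s ! i \<notin> generate ?G {s ! j |j. j < length s \<and> j \<noteq> i}"
    proof (intro allI impI)
      fix i assume "i < length s"
      then have "i = 0 \<or> i = 1 \<or> i = 2" by (intro lt3) (simp add: s_def)
      then show "s ! i \<notin> generate ?G {s ! j |j. j < length s \<and> j \<noteq> i}" using i0 i1 i2 by auto
    qed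
    moreover have "set s \<subseteq> carrier ?G" using cA by (simp add: s_def)
    moreover have "generate ?G (set s) = carrier ?G" using Q2.H_eq by (simp add: s_def)
    ultimately show ?thesis by (simp add: irredundant_gen_seq_def)
  qed
  have len: "length s = max_irr_len ?G" using assms(4) by (simp add: s_def)
  have gne: "g \<noteq> \<one>\<^bsub>?G\<^esub>"
  proof
    assume "g = \<one>\<^bsub>?G\<^esub>"
    then have "Q.cls (mg p) = Q.cls mid" by (simp add: g_def Q.one_G)
    then have "mg p = mid \<or> mg p = mneg p mid" by (rule Q.cls_eq)
    moreover have "mneg p mid = ((p - 1, 0), (0,0), (0,0), (p - 1, 0))"
      using assms(2) by (simp add: mid_def mneg.simps zmod_zminus1_eq_if)
    ultimately show False using assms(2) by (auto simp: mg_def mid_def)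
  qed
  have "\<not> seq_replacement_property ?G s"
  proof -
    have r: "generate ?G (set (s[i := g])) \<noteq> carrier ?G" if "i < length s" for i
    proof -
      have "i = 0 \<or> i = 1 \<or> i = 2" using that by (intro lt3) (simp add: s_def)
      then show ?thesis
      proof (elim disjE)
        assume "i = 0"
        then have "set (s[i := g]) \<subseteq> ?T3" using inT(4,6,9) by (simp add: s_def)
        then show ?thesis using Q.gen_le[OF Q.sub3 _ cA(1) nA] by blast
      next
        assume "i = 1"
        then have "set (s[i := g]) \<subseteq> ?T1" using inT(1,5,7) by (simp add: s_def)
        then show ?thesis using Q.gen_le[OF Q.sub1 _ cA(2) nB] by blast
      next
        assume "i = 2"
        then have "set (s[i := g]) \<subseteq> ?T2" using inT(2,3,8) by (simp add: s_def)
        then show ?thesis using Q.gen_le[OF Q.sub2 _ cA(3) nC] by blast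
      qed
    qed
    show ?thesis unfolding seq_replacement_property_def using cg gne r by blast
  qed
  then show ?thesis using irr len unfolding replacement_property_def by metis
qed


end
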